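(* Let $X$ be a real Hilbert space, $f,g:X\to\mathbb{R}\cup\{+\infty\}$ proper $\Phi_{lsc}$-convex functions and $\alpha\in\mathbb{R}$. If there exist $\varphi_1\in\mathrm{supp}(f)$ and $\varphi_2\in\mathrm{supp}(g)$ with $\{x:\varphi_1(x)<\alpha\}\cap\{x:\varphi_2(x)<\alpha\}=\emptyset$, then for every $\varepsilon>0$ there exist $x_1\in\mathrm{dom}(f)$ and $x_2\in\mathrm{dom}(g)$ such that $f$ and $g$ satisfy $ZS(\varepsilon,x_1,x_2)$, i.e. $0\in\mathrm{co}\big(\partial^\varepsilon_{lsc}f(x_1)\cup\partial^\varepsilon_{lsc}g(x_2)\big)$.
   Context: $\Phi_{lsc}$ is the class of functions $\varphi(x)=-a\|x\|^2+\langle v,x\rangle+c$ ($a\ge0$, $v\in X^*$, $c\in\mathbb{R}$); $\mathrm{supp}(f)=\{\varphi\in\Phi_{lsc}:\varphi\le f\}$; $f$ is $\Phi_{lsc}$-convex if $f=\sup\mathrm{supp}(f)$ pointwise; proper means $\mathrm{supp}(f)\ne\emptyset$ and $\mathrm{dom}(f)\ne\emptyset$. For $\varepsilon\ge0$, $\partial^\varepsilon_{lsc}f(\bar x)$ is the set of $(a,v)\in\mathbb{R}_+\times X^*$ with $f(x)-f(\bar x)\ge\langle v,x-\bar x\rangle-a\|x\|^2+a\|\bar x\|^2-\varepsilon$ for all $x\in X$; convex hull $\mathrm{co}$ is taken in $\mathbb{R}\times X^*$ and $0$ means $(0,0)$. *)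

theory Defs
  imports "HOL-Analysis.Analysis"
begin

text \<open>Elementary functions of the class Phi_lsc. The Hilbert space X is identified with
its dual X* via the Riesz representation, so v ranges over X and the pairing is the inner product.\<close>

definition Phi_lsc :: "('a::real_inner \<Rightarrow> real) set" where
  "Phi_lsc = {\<phi>. \<exists>a v c. a \<ge> 0 \<and> \<phi> = (\<lambda>x. - a * (norm x)\<^sup>2 + inner v x + c)}"

definition supp :: "('a::real_inner \<Rightarrow> ereal) \<Rightarrow> ('a \<Rightarrow> real) set" where
  "supp f = {\<phi> \<in> Phi_lsc. \<forall>x. ereal (\<phi> x) \<le> f x}"

definition Phi_lsc_convex :: "('a::real_inner \<Rightarrow> ereal) \<Rightarrow> bool" where
  "Phi_lsc_convex f \<longleftrightarrow> (\<forall>x. f x = (SUP \<phi>\<in>supp f. ereal (\<phi> x)))"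

definition edom :: "('a \<Rightarrow> ereal) \<Rightarrow> 'a set" where
  "edom f = {x. f x < \<infinity>}"

definition proper_lsc :: "('a::real_inner \<Rightarrow> ereal) \<Rightarrow> bool" where
  "proper_lsc f \<longleftrightarrow> supp f \<noteq> {} \<and> edom f \<noteq> {}"

text \<open>epsilon-subdifferential; the inequality
  f x - f xbar \<ge> <v,x-xbar> - a|x|^2 + a|xbar|^2 - eps is written with f xbar moved to the right
  (equivalent when f xbar is finite, i.e. xbar in the domain).\<close>
definition subdiff_lsc :: "real \<Rightarrow> ('a::real_inner \<Rightarrow> ereal) \<Rightarrow> 'a \<Rightarrow> (real \<times> 'a) set" where
  "subdiff_lsc \<epsilon> f xbar = {(a, v). a \<ge> 0 \<and>
     (\<forall>x. f x \<ge> f xbar + ereal (inner v (x - xbar) - a * (norm x)\<^sup>2 + a * (norm xbar)\<^sup>2 - \<epsilon>))}"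

definition ZS :: "('a::real_inner \<Rightarrow> ereal) \<Rightarrow> ('a \<Rightarrow> ereal) \<Rightarrow> real \<Rightarrow> 'a \<Rightarrow> 'a \<Rightarrow> bool" where
  "ZS f g \<epsilon> x1 x2 \<longleftrightarrow> (0::real \<times> 'a) \<in> convex hull (subdiff_lsc \<epsilon> f x1 \<union> subdiff_lsc \<epsilon> g x2)"

end

theory Submission
  imports Defs
begin


lemma quad_neg:
  fixes A B C \<alpha> :: real
  assumes "A > 0"
  shows "\<exists>t\<ge>0. -A*t^2 + B*t + C < \<alpha>"
proof -
  define t where "t = max 1 ((\<bar>B\<bar> + \<bar>C-\<alpha>\<bar> + 1)/A)"
  have t1: "t \<ge> 1" unfolding t_def by simp
  have "t \<ge> (\<bar>B\<bar> + \<bar>C-\<alpha>\<bar> + 1)/A" unfolding t_def by simp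
  hence At: "A*t \<ge> \<bar>B\<bar> + \<bar>C-\<alpha>\<bar> + 1" using assms by (simp add: field_simps)
  have "-A*t^2 + B*t = t*(B - A*t)" by (simp add: power2_eq_square algebra_simps)
  also have "\<dots> \<le> t*(-\<bar>C-\<alpha>\<bar> - 1)"
    using At t1 by (intro mult_left_mono) (auto simp: abs_le_iff)
  also have "\<dots> \<le> 1*(-\<bar>C-\<alpha>\<bar> - 1)"
    using t1 by (intro mult_right_mono_neg) auto
  finally have "-A*t^2 + B*t \<le> -\<bar>C-\<alpha>\<bar> - 1" by simp
  hence "-A*t^2 + B*t + C < \<alpha>" by linarith
  thus ?thesis using t1 by (intro exI[of _ t]) auto
qed

lemma sq_exp:
  fixes x y :: "'a::real_inner"
  shows "(norm (a *\<^sub>R x + b *\<^sub>R y))^2 = a^2 * inner x x + 2*a*b*inner x y + b^2 * inner y y"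
  unfolding power2_norm_eq_inner
  by (simp add: inner_add_left inner_add_right inner_commute algebra_simps power2_eq_square)

lemma quad_zero:
  fixes y1 y2 v1 v2 :: "'a::real_inner"
  assumes a1: "a1 \<ge> 0" and a2: "a2 \<ge> 0"
    and h1: "-a1*(norm y1)^2 + inner v1 y1 + c1 < \<alpha>"
    and h2: "-a2*(norm y2)^2 + inner v2 y2 + c2 < \<alpha>"
    and sep: "\<forall>x. -a1*(norm x)^2 + inner v1 x + c1 \<ge> \<alpha> \<or> -a2*(norm x)^2 + inner v2 x + c2 \<ge> \<alpha>"
  shows "a1 = 0"
proof (rule ccontr)
  assume "a1 \<noteq> 0"
  hence a1p: "a1 > 0" using a1 by simp
  have yne: "y1 \<noteq> y2"
  proof
    assume "y1 = y2"
    hence "-a1*(norm y2)^2 + inner v1 y2 + c1 < \<alpha>" using h1 by simp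
    thus False using h2 sep[rule_format, of y2] by linarith
  qed
  define u where "u = v2 - (2*a2) *\<^sub>R y2"
  define d where "d = (if u = 0 then y2 - y1 else -u)"
  have dnz: "d \<noteq> 0" using yne unfolding d_def by auto
  have ud: "inner u d \<le> 0" unfolding d_def by auto
  have nexp: "\<And>t. (norm (y2 + t *\<^sub>R d))^2 = (norm y2)^2 + 2*t*inner y2 d + t^2 * (norm d)^2"
    using sq_exp[of 1 y2 _ d] by (simp add: power2_norm_eq_inner)
  have key2: "-a2*(norm (y2 + t *\<^sub>R d))^2 + inner v2 (y2 + t *\<^sub>R d) + c2 < \<alpha>" if t: "t \<ge> 0" for t
  proof -
    have iu: "inner u d = inner v2 d - 2*a2*inner y2 d" unfolding u_def by (simp add: inner_diff_left)
    have "t * inner u d \<le> 0" using t ud by (simp add: mult_nonneg_nonpos)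
    moreover have "a2 * (t^2 * (norm d)^2) \<ge> 0" using a2 by simp
    ultimately have "-a2*(norm (y2 + t *\<^sub>R d))^2 + inner v2 (y2 + t *\<^sub>R d) + c2
       \<le> -a2*(norm y2)^2 + inner v2 y2 + c2"
      unfolding nexp by (simp add: inner_add_right iu algebra_simps)
    thus ?thesis using h2 by linarith
  qed
  have "a1 * (norm d)^2 > 0" using a1p dnz by simp
  from quad_neg[OF this, of "inner v1 d - 2*a1*inner y2 d" "-a1*(norm y2)^2 + inner v1 y2 + c1" \<alpha>]
  obtain t where t: "t \<ge> 0" and
    q: "-(a1 * (norm d)^2)*t^2 + (inner v1 d - 2*a1*inner y2 d)*t + (-a1*(norm y2)^2 + inner v1 y2 + c1) < \<alpha>"
    by blast
  have "-a1*(norm (y2 + t *\<^sub>R d))^2 + inner v1 (y2 + t *\<^sub>R d) + c1 < \<alpha>"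
    using q unfolding nexp by (simp add: inner_add_right algebra_simps)
  with key2[OF t] sep[rule_format, of "y2 + t *\<^sub>R d"] show False by linarith
qed

lemma lin_par:
  fixes v1 v2 :: "'a::real_inner"
  assumes v1: "v1 \<noteq> 0" and v2: "v2 \<noteq> 0"
    and sep: "\<forall>x. inner v1 x + c1 \<ge> \<alpha> \<or> inner v2 x + c2 \<ge> \<alpha>"
  shows "norm v2 *\<^sub>R v1 + norm v1 *\<^sub>R v2 = 0"
proof -
  define A where "A = inner v1 v1"
  define B where "B = inner v2 v2"
  define p where "p = inner v1 v2"
  have Ap: "A > 0" using v1 unfolding A_def by simp
  have Bp: "B > 0" using v2 unfolding B_def by simp
  have D: "A*B - p^2 = 0"
  proof (rule ccontr)
    assume Dn: "A*B - p^2 \<noteq> 0"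
    define b1 where "b1 = \<alpha> - c1 - 1"
    define b2 where "b2 = \<alpha> - c2 - 1"
    define t where "t = (b1*B - b2*p)/(A*B - p^2)"
    define s where "s = (b2*A - b1*p)/(A*B - p^2)"
    define x where "x = t *\<^sub>R v1 + s *\<^sub>R v2"
    have "inner v1 x = t*A + s*p" unfolding x_def A_def p_def by (simp add: inner_add_right)
    also have "\<dots> = ((b1*B - b2*p)*A + (b2*A - b1*p)*p)/(A*B - p^2)"
      unfolding t_def s_def by (simp add: add_divide_distrib)
    also have "\<dots> = b1*(A*B - p^2)/(A*B - p^2)" by (simp add: algebra_simps power2_eq_square)
    also have "\<dots> = b1" using Dn by simp
    finally have e1: "inner v1 x = b1" .
    have "inner v2 x = t*p + s*B" unfolding x_def B_def p_def by (simp add: inner_add_right inner_commute)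
    also have "\<dots> = ((b1*B - b2*p)*p + (b2*A - b1*p)*B)/(A*B - p^2)"
      unfolding t_def s_def by (simp add: add_divide_distrib)
    also have "\<dots> = b2*(A*B - p^2)/(A*B - p^2)" by (simp add: algebra_simps power2_eq_square)
    also have "\<dots> = b2" using Dn by simp
    finally have e2: "inner v2 x = b2" .
    show False using sep[rule_format, of x] e1 e2 unfolding b1_def b2_def by linarith
  qed
  have pn: "p < 0"
  proof (rule ccontr)
    assume "\<not> p < 0"
    hence p0: "p \<ge> 0" by simp
    define t where "t = (\<bar>\<alpha>-c1\<bar>+1)/(A+p) + (\<bar>\<alpha>-c2\<bar>+1)/(B+p)"
    define x where "x = (-t) *\<^sub>R (v1 + v2)"
    have t1: "t*(A+p) \<ge> \<bar>\<alpha>-c1\<bar>+1"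
    proof -
      have "t \<ge> (\<bar>\<alpha>-c1\<bar>+1)/(A+p)" unfolding t_def using Bp p0 by simp
      thus ?thesis using Ap p0 by (simp add: field_simps)
    qed
    have t2: "t*(B+p) \<ge> \<bar>\<alpha>-c2\<bar>+1"
    proof -
      have "t \<ge> (\<bar>\<alpha>-c2\<bar>+1)/(B+p)" unfolding t_def using Ap p0 by simp
      thus ?thesis using Bp p0 by (simp add: field_simps)
    qed
    have e1: "inner v1 x = -t*(A+p)" unfolding x_def A_def p_def by (simp add: inner_add_right algebra_simps)
    have e2: "inner v2 x = -t*(B+p)" unfolding x_def B_def p_def by (simp add: inner_add_right inner_commute algebra_simps)
    show False using sep[rule_format, of x] e1 e2 t1 t2 by (auto simp: abs_le_iff) 
  qed
  have nA: "A = (norm v1)^2" unfolding A_def by (simp add: power2_norm_eq_inner)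
  have nB: "B = (norm v2)^2" unfolding B_def by (simp add: power2_norm_eq_inner)
  have "(-p)^2 = (norm v1 * norm v2)^2" using D nA nB by (simp add: power_mult_distrib)
  hence pe: "-p = norm v1 * norm v2" using pn by (subst (asm) power2_eq_iff_nonneg) auto
  have "(norm (norm v2 *\<^sub>R v1 + norm v1 *\<^sub>R v2))^2
      = (norm v2)^2 * A + 2*(norm v1 * norm v2)*p + (norm v1)^2 * B"
    unfolding sq_exp A_def B_def p_def by simp
  also have "\<dots> = (norm v2)^2 * (norm v1)^2 + 2*(norm v1 * norm v2)*(-(norm v1 * norm v2)) + (norm v1)^2 * (norm v2)^2"
    using pe nA nB by (metis minus_minus)
  also have "\<dots> = 0" by (simp add: algebra_simps power2_eq_square)
  finally show ?thesis by simp
qed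

lemma eps_min:
  fixes f :: "'a::real_inner \<Rightarrow> ereal"
  assumes ne: "\<forall>x. f x \<noteq> -\<infinity>" and dom: "edom f \<noteq> {}"
    and low: "\<forall>x. ereal (inner v x + c) \<le> f x" and e: "\<epsilon> > 0"
  shows "\<exists>x1\<in>edom f. (0, v) \<in> subdiff_lsc \<epsilon> f x1"
proof -
  define r where "r x = real_of_ereal (f x) - inner v x" for x
  have fin: "f x = ereal (real_of_ereal (f x))" if "x \<in> edom f" for x
    using that ne[rule_format, of x] unfolding edom_def by (cases "f x") auto
  have lb: "c \<le> r x" if "x \<in> edom f" for x
    using low[rule_format, of x] fin[OF that] unfolding r_def by (metis ereal_less_eq(3) le_diff_eq add.commute)
  define S where "S = r ` edom f"
  have Sne: "S \<noteq> {}" using dom unfolding S_def by simp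
  have bdd: "bdd_below S" unfolding S_def using lb by (intro bdd_belowI[of _ c]) auto
  have "Inf S < Inf S + \<epsilon>" using e by simp
  from cInf_lessD[OF Sne this] obtain x1 where x1: "x1 \<in> edom f" "r x1 < Inf S + \<epsilon>"
    unfolding S_def by auto
  have "\<forall>x. f x \<ge> f x1 + ereal (inner v (x - x1) - 0 * (norm x)\<^sup>2 + 0 * (norm x1)\<^sup>2 - \<epsilon>)"
  proof
    fix x
    show "f x \<ge> f x1 + ereal (inner v (x - x1) - 0 * (norm x)\<^sup>2 + 0 * (norm x1)\<^sup>2 - \<epsilon>)"
    proof (cases "x \<in> edom f")
      case False
      hence "f x = \<infinity>" unfolding edom_def by simp
      thus ?thesis by simp
    next
      case True
      have "Inf S \<le> r x" using True bdd unfolding S_def by (intro cInf_lower) auto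
      hence "r x1 < r x + \<epsilon>" using x1 by linarith
      hence "real_of_ereal (f x1) + (inner v (x - x1) - \<epsilon>) \<le> real_of_ereal (f x)"
        unfolding r_def by (simp add: inner_diff_right)
      thus ?thesis using fin[OF True] fin[OF x1(1)]
        by (metis (no_types, lifting) diff_zero mult_zero_left plus_ereal.simps(1) ereal_less_eq(3) add_0_right)
    qed
  qed
  thus ?thesis using x1(1) unfolding subdiff_lsc_def by auto
qed


lemma ZS_single_f:
  assumes "x1 \<in> edom f" "x2 \<in> edom g" "(0, 0) \<in> subdiff_lsc \<epsilon> f x1"
  shows "ZS f g \<epsilon> x1 x2"
  unfolding ZS_def zero_prod_def using assms(3) by (intro hull_inc) auto

lemma ZS_single_g:
  assumes "x1 \<in> edom f" "x2 \<in> edom g" "(0, 0) \<in> subdiff_lsc \<epsilon> g x2"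
  shows "ZS f g \<epsilon> x1 x2"
  unfolding ZS_def zero_prod_def using assms(3) by (intro hull_inc) auto

theorem mainTheorem12:
  fixes f g :: "'a::{real_inner, complete_space} \<Rightarrow> ereal" and \<alpha> :: real
  assumes f_ne: "\<forall>x. f x \<noteq> -\<infinity>" and g_ne: "\<forall>x. g x \<noteq> -\<infinity>"
    and f_prop: "proper_lsc f" and g_prop: "proper_lsc g"
    and f_conv: "Phi_lsc_convex f" and g_conv: "Phi_lsc_convex g"
    and \<phi>1: "\<phi>1 \<in> supp f" and \<phi>2: "\<phi>2 \<in> supp g"
    and sep: "{x. \<phi>1 x < \<alpha>} \<inter> {x. \<phi>2 x < \<alpha>} = {}"
  shows "\<forall>\<epsilon>>0. \<exists>x1\<in>edom f. \<exists>x2\<in>edom g. ZS f g \<epsilon> x1 x2"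
proof (intro allI impI)
  fix \<epsilon> :: real assume e: "\<epsilon> > 0"
  obtain a1 v1 c1 where a1: "a1 \<ge> 0" and p1: "\<phi>1 = (\<lambda>x. - a1 * (norm x)\<^sup>2 + inner v1 x + c1)"
    using \<phi>1 unfolding supp_def Phi_lsc_def by blast
  obtain a2 v2 c2 where a2: "a2 \<ge> 0" and p2: "\<phi>2 = (\<lambda>x. - a2 * (norm x)\<^sup>2 + inner v2 x + c2)"
    using \<phi>2 unfolding supp_def Phi_lsc_def by blast
  have fl: "\<forall>x. ereal (\<phi>1 x) \<le> f x" using \<phi>1 unfolding supp_def by blast
  have gl: "\<forall>x. ereal (\<phi>2 x) \<le> g x" using \<phi>2 unfolding supp_def by blast
  have fd: "edom f \<noteq> {}" using f_prop unfolding proper_lsc_def by blast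
  have gd: "edom g \<noteq> {}" using g_prop unfolding proper_lsc_def by blast
  obtain xf where xf: "xf \<in> edom f" using fd by blast
  obtain xg where xg: "xg \<in> edom g" using gd by blast
  have sep': "\<forall>x. \<phi>1 x \<ge> \<alpha> \<or> \<phi>2 x \<ge> \<alpha>"
  proof
    fix x show "\<phi>1 x \<ge> \<alpha> \<or> \<phi>2 x \<ge> \<alpha>"
      using sep by (metis (mono_tags, lifting) IntI empty_iff mem_Collect_eq not_le)
  qed
  show "\<exists>x1\<in>edom f. \<exists>x2\<in>edom g. ZS f g \<epsilon> x1 x2"
  proof (cases "\<forall>x. \<phi>1 x \<ge> \<alpha>")
    case True
    have "\<forall>x. ereal (inner 0 x + \<alpha>) \<le> f x"
      using True fl by (metis inner_zero_left add_0 ereal_less_eq(3) order_trans)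
    from eps_min[OF f_ne fd this e] obtain x1 where "x1 \<in> edom f" "(0,0) \<in> subdiff_lsc \<epsilon> f x1" by blast
    thus ?thesis using ZS_single_f xg by blast
  next
    case nf: False
    show ?thesis
    proof (cases "\<forall>x. \<phi>2 x \<ge> \<alpha>")
      case True
      have "\<forall>x. ereal (inner 0 x + \<alpha>) \<le> g x"
        using True gl by (metis inner_zero_left add_0 ereal_less_eq(3) order_trans)
      from eps_min[OF g_ne gd this e] obtain x2 where "x2 \<in> edom g" "(0,0) \<in> subdiff_lsc \<epsilon> g x2" by blast
      thus ?thesis using ZS_single_g xf by blast
    next
      case False
      obtain y1 where y1: "\<phi>1 y1 < \<alpha>" using nf by (auto simp: not_le)
      obtain y2 where y2: "\<phi>2 y2 < \<alpha>" using False by (auto simp: not_le)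
      have a10: "a1 = 0"
        using quad_zero[OF a1 a2, of y1 v1 c1 \<alpha> y2 v2 c2] y1 y2 sep' unfolding p1 p2 by blast
      have sep2: "\<forall>x. - a2 * (norm x)\<^sup>2 + inner v2 x + c2 \<ge> \<alpha> \<or> - a1 * (norm x)\<^sup>2 + inner v1 x + c1 \<ge> \<alpha>"
        using sep' unfolding p1 p2 by blast
      have a20: "a2 = 0"
        using quad_zero[OF a2 a1, of y2 v2 c2 \<alpha> y1 v1 c1] y1 y2 sep2 unfolding p1 p2 by blast
      have q1: "\<phi>1 = (\<lambda>x. inner v1 x + c1)" using p1 a10 by simp
      have q2: "\<phi>2 = (\<lambda>x. inner v2 x + c2)" using p2 a20 by simp
      have sepl: "\<forall>x. inner v1 x + c1 \<ge> \<alpha> \<or> inner v2 x + c2 \<ge> \<alpha>" using sep' unfolding q1 q2 by blast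
      have v1: "v1 \<noteq> 0"
      proof
        assume "v1 = 0"
        hence "\<phi>1 y2 < \<alpha>" using y1 unfolding q1 by simp
        thus False using y2 sep' by (meson not_le)
      qed
      have v2: "v2 \<noteq> 0"
      proof
        assume "v2 = 0"
        hence "\<phi>2 y1 < \<alpha>" using y2 unfolding q2 by simp
        thus False using y1 sep' by (meson not_le)
      qed
      have par: "norm v2 *\<^sub>R v1 + norm v1 *\<^sub>R v2 = 0" using lin_par[OF v1 v2 sepl] .
      from eps_min[OF f_ne fd _ e, of v1 c1] fl q1
      obtain x1 where x1: "x1 \<in> edom f" "(0,v1) \<in> subdiff_lsc \<epsilon> f x1" by auto
      from eps_min[OF g_ne gd _ e, of v2 c2] gl q2
      obtain x2 where x2: "x2 \<in> edom g" "(0,v2) \<in> subdiff_lsc \<epsilon> g x2" by auto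
      define s where "s = norm v1 + norm v2"
      have sp: "s > 0" using v1 v2 unfolding s_def by (simp add: add_pos_pos)
      have "(norm v2 / s) *\<^sub>R ((0::real), v1) + (norm v1 / s) *\<^sub>R (0, v2)
            \<in> convex hull (subdiff_lsc \<epsilon> f x1 \<union> subdiff_lsc \<epsilon> g x2)"
        apply (rule convexD[OF convex_convex_hull])
        using x1 x2 sp by (auto intro: hull_inc simp: s_def add_divide_distrib[symmetric])
      moreover have "(norm v2 / s) *\<^sub>R ((0::real), v1) + (norm v1 / s) *\<^sub>R (0, v2) = 0"
      proof -
        have "(norm v2 / s) *\<^sub>R v1 + (norm v1 / s) *\<^sub>R v2 = (1/s) *\<^sub>R (norm v2 *\<^sub>R v1 + norm v1 *\<^sub>R v2)"
          by (simp add: scaleR_add_right)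
        also have "\<dots> = 0" using par by simp
        finally show ?thesis by (simp add: zero_prod_def)
      qed
      ultimately show ?thesis using x1 x2 unfolding ZS_def by metis
    qed
  qed
qed

end
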